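(* The algebra $\mathcal{S}$ is a quasimodular algebra. More precisely, for every $n\ge1$ and all positive even integers $k_1,\dots,k_n$, $$\langle S_{k_1}S_{k_2}\cdots S_{k_n}\rangle_q=\sum_{\alpha\in\Pi(n)}\prod_{A\in\alpha}D^{|A|-1}G_{k_A-2|A|+2},\qquad k_A:=\sum_{a\in A}k_a .$$
   Context: Partitions $\lambda=(\lambda_1\ge\lambda_2\ge\dots)$, $|\lambda|=\sum\lambda_i$, $\mathscr{P}$ the set of all partitions. For $f:\mathscr{P}\to\mathbb{Q}$, $\langle f\rangle_q=\frac{\sum_\lambda f(\lambda)q^{|\lambda|}}{\sum_\lambda q^{|\lambda|}}\in\mathbb{Q}[[q]]$. For even $k\ge2$, $S_k(\lambda)=-\frac{B_k}{2k}+\sum_i\lambda_i^{k-1}$ ($B_k$ Bernoulli numbers), and $\mathcal{S}$ is the algebra generated by these under the pointwise product, graded by giving $S_{k_1}\cdots S_{k_n}$ weight $\sum k_i$. A quasimodular algebra is a graded space of functions $\mathscr{P}\to\mathbb{Q}$ such that the $q$-bracket of every homogeneous element of weight $k$ is a quasimodular form of weight $k$ for $\mathrm{SL}_2(\mathbb{Z})$. $G_k=-\frac{B_k}{2k}+\sum_{m,r\ge1}m^{k-1}q^{mr}$ ($k\ge2$ even) are Eisenstein series and $D=q\frac{d}{dq}$. $\Pi(n)$ is the set of set partitions of $\{1,\dots,n\}$ (each $\alpha\in\Pi(n)$ is a set of disjoint nonempty blocks $A$ with union $\{1,\dots,n\}$). *)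

theory Defs
  imports "HOL-Library.Multiset" "HOL-Library.Disjoint_Sets"
          "HOL-Computational_Algebra.Formal_Power_Series"
begin

text \<open>Bernoulli numbers (convention B_1 = -1/2; only even indices are used):
  B_0 = 1 and sum_{j<=n} C(n+1,j) B_j = 0 for n >= 1.\<close>
fun bernoulli :: "nat \<Rightarrow> rat" where
  "bernoulli n = (if n = 0 then 1 else
     - (\<Sum>j<n. of_nat ((n + 1) choose j) * bernoulli j) / of_nat (n + 1))"

definition int_partitions :: "nat \<Rightarrow> nat multiset set" where
  "int_partitions m = {M. (\<forall>x\<in>#M. 0 < x) \<and> sum_mset M = m}"

definition qbracket :: "(nat multiset \<Rightarrow> rat) \<Rightarrow> rat fps" where
  "qbracket f =
     Abs_fps (\<lambda>m. \<Sum>M\<in>int_partitions m. f M) /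
     Abs_fps (\<lambda>m. of_nat (card (int_partitions m)))"

definition S_fun :: "nat \<Rightarrow> nat multiset \<Rightarrow> rat" where
  "S_fun k M = - bernoulli k / (2 * of_nat k) +
               of_nat (sum_mset (image_mset (\<lambda>x. x ^ (k - 1)) M))"

definition eisenstein :: "nat \<Rightarrow> rat fps" where
  "eisenstein k = Abs_fps (\<lambda>n. if n = 0 then - bernoulli k / (2 * of_nat k)
                                else of_nat (\<Sum>d | d dvd n. d ^ (k - 1)))"

definition qD :: "rat fps \<Rightarrow> rat fps" where
  "qD f = fps_X * fps_deriv f"

end

theory Submission
  imports Defs
begin


lemma part_recursion:
  fixes x :: 'a and J :: "'a set" and h :: "'a set set \<Rightarrow> 'b::comm_monoid_add"
  assumes fin: "finite J" and xJ: "x \<notin> J"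
  shows "(\<Sum>\<alpha>\<in>{P. partition_on (insert x J) P}. h \<alpha>) =
         (\<Sum>B\<in>Pow J. \<Sum>\<beta>\<in>{P. partition_on (J - B) P}. h (insert (insert x B) \<beta>))"
proof -
  define blk where "blk \<alpha> = (THE A. A \<in> \<alpha> \<and> x \<in> A)" for \<alpha> :: "'a set set"
  define \<phi> where "\<phi> = (\<lambda>(B, \<beta>). insert (insert x B) \<beta>)"
  define \<psi> where "\<psi> \<alpha> = (blk \<alpha> - {x}, \<alpha> - {blk \<alpha>})" for \<alpha>
  define S where "S = (SIGMA B:Pow J. {P. partition_on (J - B) P})"
  define T where "T = {P. partition_on (insert x J) P}"
  have blk_phi: "blk (insert (insert x B) \<beta>) = insert x B" if "(B, \<beta>) \<in> S" for B \<beta>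
  proof -
    from that have "\<Union>\<beta> = J - B" by (auto simp: S_def partition_on_def)
    then have "x \<notin> \<Union>\<beta>" using xJ by auto
    then show ?thesis unfolding blk_def by (intro the_equality) auto
  qed
  have phiT: "\<phi> p \<in> T" if "p \<in> S" for p
  proof -
    obtain B \<beta> where p: "p = (B, \<beta>)" by (cases p)
    from that p have B: "B \<subseteq> J" and pb: "partition_on (J - B) \<beta>" by (auto simp: S_def)
    have "\<Union>\<beta> = J - B" using pb by (auto simp: partition_on_def)
    then have dis: "disjnt (insert x B) (\<Union>\<beta>)" using xJ by (auto simp: disjnt_def)
    have eq: "insert x J - insert x B = J - B" using xJ by auto
    have iff: "partition_on (insert x J) (insert (insert x B) \<beta>) \<longleftrightarrow>
          partition_on (insert x J - insert x B) \<beta> \<and> insert x B \<subseteq> insert x J \<and> insert x B \<noteq> {}"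
      by (rule partition_on_insert[OF dis])
    have "insert x B \<subseteq> insert x J" using B by auto
    then have "partition_on (insert x J) (insert (insert x B) \<beta>)"
      using iff pb unfolding eq by simp
    then show ?thesis by (simp add: p \<phi>_def T_def)
  qed
  have psi_phi: "\<psi> (\<phi> p) = p" if "p \<in> S" for p
  proof -
    obtain B \<beta> where p: "p = (B, \<beta>)" by (cases p)
    from that p have B: "B \<subseteq> J" and pb: "partition_on (J - B) \<beta>" by (auto simp: S_def)
    have "\<Union>\<beta> = J - B" using pb by (auto simp: partition_on_def)
    then have "insert x B \<notin> \<beta>" using xJ by auto
    moreover have "x \<notin> B" using B xJ by auto
    ultimately show ?thesis using blk_phi[OF that[unfolded p]] by (auto simp: p \<phi>_def \<psi>_def)
  qed
  have blk_props: "blk \<alpha> \<in> \<alpha> \<and> x \<in> blk \<alpha>" if "\<alpha> \<in> T" for \<alpha>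
  proof -
    have pa: "partition_on (insert x J) \<alpha>" using that by (simp add: T_def)
    then obtain A where A: "A \<in> \<alpha>" "x \<in> A" by (auto simp: partition_on_def)
    have uniq: "A' = A" if "A' \<in> \<alpha>" "x \<in> A'" for A'
      using pa A that by (auto simp: partition_on_def disjoint_def)
    have "\<exists>!A. A \<in> \<alpha> \<and> x \<in> A" using A uniq by blast
    then show ?thesis unfolding blk_def by (rule theI')
  qed
  have psiS: "\<psi> \<alpha> \<in> S" and phi_psi: "\<phi> (\<psi> \<alpha>) = \<alpha>" if "\<alpha> \<in> T" for \<alpha>
  proof -
    have pa: "partition_on (insert x J) \<alpha>" using that by (simp add: T_def)
    define A where "A = blk \<alpha>"
    have A: "A \<in> \<alpha>" "x \<in> A" using blk_props[OF that] by (auto simp: A_def)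
    have ins: "\<alpha> = insert A (\<alpha> - {A})" using A by auto
    have dis: "disjnt A (\<Union>(\<alpha> - {A}))"
      using pa A by (auto simp: partition_on_def disjoint_def disjnt_def)
    have "partition_on (insert x J) (insert A (\<alpha> - {A}))" using pa A by (simp add: insert_absorb)
    then have p2: "partition_on (insert x J - A) (\<alpha> - {A})" and AJ: "A \<subseteq> insert x J"
      using partition_on_insert[OF dis] by auto
    have "insert x J - A = J - (A - {x})" using A xJ by auto
    with p2 AJ xJ show "\<psi> \<alpha> \<in> S" by (auto simp: \<psi>_def S_def A_def[symmetric])
    show "\<phi> (\<psi> \<alpha>) = \<alpha>" using A by (auto simp: \<psi>_def \<phi>_def A_def[symmetric] insert_absorb)
  qed
  have bij: "bij_betw \<phi> S T"
    by (rule bij_betw_byWitness[where f'=\<psi>]) (use psi_phi phi_psi phiT psiS in auto)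
  have finS: "finite S" unfolding S_def using fin
    by (intro finite_SigmaI) (auto intro: finitely_many_partition_on)
  have "(\<Sum>B\<in>Pow J. \<Sum>\<beta>\<in>{P. partition_on (J - B) P}. h (insert (insert x B) \<beta>))
        = (\<Sum>p\<in>S. h (\<phi> p))"
    unfolding S_def \<phi>_def using fin
    by (subst sum.Sigma) (auto intro: finitely_many_partition_on simp: case_prod_unfold)
  also have "\<dots> = (\<Sum>\<alpha>\<in>T. h \<alpha>)"
    using sum.reindex_bij_betw[OF bij, of h] .
  finally show ?thesis by (simp add: T_def)
qed



lemma mem_le_sum_mset: "x \<in># M \<Longrightarrow> x \<le> sum_mset (M::nat multiset)"
  by (induction M) auto

lemma size_le_sum_mset: "\<forall>x\<in>#M. 0 < (x::nat) \<Longrightarrow> size M \<le> sum_mset M"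
  by (induction M) auto

lemma finite_IP: "finite (int_partitions N)"
proof (rule finite_subset)
  show "int_partitions N \<subseteq> mset ` {xs. set xs \<subseteq> {0..N} \<and> length xs \<le> N}"
  proof
    fix M assume M: "M \<in> int_partitions N"
    obtain xs where xs: "mset xs = M" using ex_mset by blast
    have "set xs \<subseteq> {0..N}"
    proof
      fix x assume "x \<in> set xs"
      then have "x \<in># M" using xs by auto
      then have "x \<le> sum_mset M" by (rule mem_le_sum_mset)
      then show "x \<in> {0..N}" using M by (simp add: int_partitions_def)
    qed
    moreover have "length xs = size M" using xs by auto
    moreover have "size M \<le> N" using M size_le_sum_mset[of M]
      by (simp add: int_partitions_def)
    ultimately show "M \<in> mset ` {xs. set xs \<subseteq> {0..N} \<and> length xs \<le> N}" using xs by auto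
  qed
  show "finite (mset ` {xs. set xs \<subseteq> {0..N} \<and> length xs \<le> N})"
    by (intro finite_imageI finite_lists_length_le) auto
qed

lemma IP_0: "int_partitions 0 = {{#}}"
proof -
  have "M = {#}" if "\<forall>x\<in>#M. 0 < x" "sum_mset M = 0" for M :: "nat multiset"
    using that by (cases M) auto
  then show ?thesis by (auto simp: int_partitions_def)
qed

lemma sum_mset_count:
  fixes g :: "nat \<Rightarrow> 'a::comm_semiring_1"
  assumes "set_mset M \<subseteq> S" "finite S"
  shows "(\<Sum>x\<in>#M. g x) = (\<Sum>m\<in>S. of_nat (count M m) * g m)"
  using assms(1)
proof (induction M)
  case empty then show ?case by simp
next
  case (add x M)
  then have xS: "x \<in> S" and MS: "set_mset M \<subseteq> S" by auto
  have "(\<Sum>m\<in>S. of_nat (count (add_mset x M) m) * g m) =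
        (\<Sum>m\<in>S. of_nat (count M m) * g m + (if m = x then g m else 0))"
    by (rule sum.cong[OF refl]) (simp add: distrib_right add.commute)
  also have "\<dots> = (\<Sum>m\<in>S. of_nat (count M m) * g m) + (\<Sum>m\<in>S. if m = x then g m else 0)"
    by (rule sum.distrib)
  also have "(\<Sum>m\<in>S. if m = x then g m else 0) = g x"
    using xS assms(2) by (simp add: sum.delta)
  finally have eq: "(\<Sum>m\<in>S. of_nat (count (add_mset x M) m) * g m) = (\<Sum>m\<in>S. of_nat (count M m) * g m) + g x" .
  have "(\<Sum>y\<in>#add_mset x M. g y) = g x + (\<Sum>y\<in>#M. g y)" by simp
  also have "\<dots> = g x + (\<Sum>m\<in>S. of_nat (count M m) * g m)" using add.IH[OF MS] by simp
  finally show ?case using eq by (metis add.commute)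
qed

lemma count_lemma:
  fixes f :: "nat multiset \<Rightarrow> rat" and m :: nat
  assumes m: "1 \<le> m"
  shows "(\<Sum>M\<in>int_partitions N. of_nat (count M m) * f M) =
         (\<Sum>j=1..N div m. \<Sum>\<mu>\<in>int_partitions (N - j*m). f (\<mu> + replicate_mset j m))"
proof -
  have cnt: "count M m \<le> N div m" if "M \<in> int_partitions N" for M
  proof -
    have "sum_mset (image_mset (\<lambda>x. if x = m then m else 0) M) \<le> sum_mset (image_mset (\<lambda>x. x) M)"
      by (rule sum_mset_mono) auto
    then have "count M m * m \<le> sum_mset M" by (simp add: sum_mset_delta mult.commute)
    then have "count M m * m \<le> N" using that by (simp add: int_partitions_def)
    then show ?thesis using m by (simp add: less_eq_div_iff_mult_less_eq)
  qed
  have "(\<Sum>M\<in>int_partitions N. of_nat (count M m) * f M) =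
        (\<Sum>M\<in>int_partitions N. \<Sum>j=1..N div m. if j \<le> count M m then f M else 0)"
  proof (rule sum.cong[OF refl])
    fix M assume M: "M \<in> int_partitions N"
    have "(\<Sum>j=1..N div m. if j \<le> count M m then f M else 0) = (\<Sum>j\<in>{1..count M m}. f M)"
      using cnt[OF M] by (intro sum.mono_neutral_cong_right) auto
    then show "of_nat (count M m) * f M = (\<Sum>j=1..N div m. if j \<le> count M m then f M else 0)"
      by simp
  qed
  also have "\<dots> = (\<Sum>j=1..N div m. \<Sum>M\<in>int_partitions N. if j \<le> count M m then f M else 0)"
    by (rule sum.swap)
  also have "\<dots> = (\<Sum>j=1..N div m. \<Sum>\<mu>\<in>int_partitions (N - j*m). f (\<mu> + replicate_mset j m))"
  proof (rule sum.cong[OF refl])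
    fix j assume j: "j \<in> {1..N div m}"
    then have jm: "j * m \<le> N" using m by (simp add: less_eq_div_iff_mult_less_eq)
    have "(\<Sum>M\<in>int_partitions N. if j \<le> count M m then f M else 0) =
          (\<Sum>M\<in>{M\<in>int_partitions N. j \<le> count M m}. f M)"
      by (simp add: sum.inter_filter[OF finite_IP])
    also have "\<dots> = (\<Sum>\<mu>\<in>int_partitions (N - j*m). f (\<mu> + replicate_mset j m))"
    proof (rule sum.reindex_bij_witness[where j="\<lambda>M. M - replicate_mset j m"
                                          and i="\<lambda>\<mu>. \<mu> + replicate_mset j m"])
      fix M assume M: "M \<in> {M \<in> int_partitions N. j \<le> count M m}"
      then have sub: "replicate_mset j m \<subseteq># M"
        using count_le_replicate_mset_subset_eq[of j M m] by simp
      then show "M - replicate_mset j m + replicate_mset j m = M" by simp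
      show "f (M - replicate_mset j m + replicate_mset j m) = f M" using sub by simp
      have "sum_mset (M - replicate_mset j m + replicate_mset j m) = sum_mset M"
        using sub by simp
      then have "sum_mset (M - replicate_mset j m) + j * m = sum_mset M"
        by simp
      then have "sum_mset (M - replicate_mset j m) = sum_mset M - j * m"
        by simp
      then show "M - replicate_mset j m \<in> int_partitions (N - j*m)"
        using M by (auto simp: int_partitions_def dest: in_diffD)
    next
      fix \<mu> assume mu: "\<mu> \<in> int_partitions (N - j*m)"
      then show "\<mu> + replicate_mset j m - replicate_mset j m = \<mu>" by simp
      show "\<mu> + replicate_mset j m \<in> {M \<in> int_partitions N. j \<le> count M m}"
        using mu jm m by (auto simp: int_partitions_def)
    qed
    finally show "(\<Sum>M\<in>int_partitions N. if j \<le> count M m then f M else 0) =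
          (\<Sum>\<mu>\<in>int_partitions (N - j*m). f (\<mu> + replicate_mset j m))" .
  qed
  finally show ?thesis .
qed



lemma qD_nth: "fps_nth (qD f) t = of_nat t * fps_nth f t"
  by (cases t) (simp_all add: qD_def)

lemma qD_pow_nth: "fps_nth ((qD ^^ r) f) t = of_nat t ^ r * fps_nth f t"
  by (induction r) (simp_all add: qD_nth)

lemma divisor_reindex:
  fixes h :: "nat \<Rightarrow> nat \<Rightarrow> rat"
  shows "(\<Sum>t=1..N. \<Sum>d\<in>{d. d dvd t}. h d (t div d)) = (\<Sum>m=1..N. \<Sum>j=1..N div m. h m j)"
proof -
  have fin1: "finite {d. d dvd t}" if "t \<in> {1..N}" for t
    using that by (auto intro: finite_divisors_nat)
  have "(\<Sum>t=1..N. \<Sum>d\<in>{d. d dvd t}. h d (t div d)) =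
        (\<Sum>p\<in>(SIGMA t:{1..N}. {d. d dvd t}). h (snd p) (fst p div snd p))"
    using fin1 by (subst sum.Sigma) (auto simp: case_prod_unfold)
  also have "\<dots> = (\<Sum>p\<in>(SIGMA m:{1..N}. {1..N div m}). h (fst p) (snd p))"
  proof (rule sum.reindex_bij_witness[where j="\<lambda>(t,d). (d, t div d)" and i="\<lambda>(m,j). (m*j, m)"])
    fix a assume a: "a \<in> (SIGMA m:{1..N}. {1..N div m})"
    obtain m j where aa: "a = (m, j)" by (cases a)
    from a aa have m: "1 \<le> m" "m \<le> N" and j: "1 \<le> j" "j \<le> N div m" by auto
    have "m * j \<le> m * (N div m)" using j by simp
    also have "\<dots> \<le> N" by simp
    finally have "m * j \<le> N" .
    moreover have "1 \<le> m * j" using m j by simp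
    ultimately show "(case (case a of (m, j) \<Rightarrow> (m * j, m)) of (t, d) \<Rightarrow> (d, t div d)) = a"
      and "(case a of (m, j) \<Rightarrow> (m * j, m)) \<in> (SIGMA t:{1..N}. {d. d dvd t})"
      using m by (auto simp: aa)
  next
    fix b assume b: "b \<in> (SIGMA t:{1..N}. {d. d dvd t})"
    obtain t d where bb: "b = (t, d)" by (cases b)
    from b bb have t: "1 \<le> t" "t \<le> N" and d: "d dvd t" by auto
    have dpos: "0 < d" using t d by (metis dvd_0_left_iff not_one_le_zero gr0I)
    have dle: "d \<le> t" using t d by (simp add: dvd_imp_le)
    have q1: "1 \<le> t div d" using dle dpos by (metis One_nat_def Suc_leI div_greater_zero_iff)
    have q2: "t div d \<le> N div d" using t by (simp add: div_le_mono)
    show "(case (case b of (t, d) \<Rightarrow> (d, t div d)) of (m, j) \<Rightarrow> (m * j, m)) = b"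
      using d by (simp add: bb)
    show "(case b of (t, d) \<Rightarrow> (d, t div d)) \<in> (SIGMA m:{1..N}. {1..N div m})"
      using dpos dle t q1 q2 by (auto simp: bb)
    show "h (fst (case b of (t, d) \<Rightarrow> (d, t div d))) (snd (case b of (t, d) \<Rightarrow> (d, t div d))) = h (snd b) (fst b div snd b)"
      by (simp add: bb)
  qed
  also have "\<dots> = (\<Sum>m=1..N. \<Sum>j=1..N div m. h m j)"
    by (subst sum.Sigma) (auto simp: case_prod_unfold)
  finally show ?thesis .
qed

lemma S_fun_add: "S_fun k (\<mu> + replicate_mset j m) = S_fun k \<mu> + of_nat j * of_nat m ^ (k - 1)"
  by (simp add: S_fun_def)


definition FF :: "(nat \<Rightarrow> nat) \<Rightarrow> nat set \<Rightarrow> rat fps" where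
  "FF k I = Abs_fps (\<lambda>N. \<Sum>M\<in>int_partitions N. \<Prod>i\<in>I. S_fun (k i) M)"

definition CC :: "(nat \<Rightarrow> nat) \<Rightarrow> nat set \<Rightarrow> rat fps" where
  "CC k A = (qD ^^ (card A - 1)) (eisenstein ((\<Sum>a\<in>A. k a) + 2 - 2 * card A))"

lemma sum_minus_one_nat:
  assumes "finite B" "\<forall>i\<in>B. 1 \<le> (k::nat\<Rightarrow>nat) i"
  shows "(\<Sum>i\<in>B. k i - 1) + card B = (\<Sum>i\<in>B. k i)"
  using assms by (induction B rule: finite_induct) auto

lemma sum_ge_two_card:
  assumes "finite B" "\<forall>i\<in>B. 2 \<le> (k::nat\<Rightarrow>nat) i"
  shows "2 * card B \<le> (\<Sum>i\<in>B. k i)"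
  using assms by (induction B rule: finite_induct) auto

lemma rhs_piece:
  fixes F :: "rat fps"
  assumes finB: "finite B" and xB: "x \<notin> B" and kge: "\<forall>i\<in>insert x B. 2 \<le> k i"
  shows "fps_nth (CC k (insert x B) * F) N =
     (if B = {} then fps_nth (eisenstein (k x)) 0 * fps_nth F N else 0) +
     (\<Sum>m=1..N. \<Sum>j=1..N div m. of_nat j ^ card B * of_nat m ^ ((k x - 1) + (\<Sum>i\<in>B. k i - 1)) * fps_nth F (N - j*m))"
proof -
  define w where "w = (\<Sum>a\<in>insert x B. k a) + 2 - 2 * card (insert x B)"
  define e where "e = (k x - 1) + (\<Sum>i\<in>B. k i - 1)"
  have cardI: "card (insert x B) = Suc (card B)" using finB xB by simp
  have s1: "(\<Sum>i\<in>B. k i - 1) + card B = (\<Sum>i\<in>B. k i)"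
  proof (rule sum_minus_one_nat[OF finB])
    show "\<forall>i\<in>B. 1 \<le> k i" using kge by fastforce
  qed
  have s2: "2 * card B \<le> (\<Sum>i\<in>B. k i)" using sum_ge_two_card[OF finB, of k] kge by blast
  have kx: "2 \<le> k x" using kge by simp
  have wdef: "w = k x + (\<Sum>i\<in>B. k i) - 2 * card B"
    unfolding w_def using finB xB cardI by simp
  have we: "card B + (w - 1) = e" unfolding wdef e_def using s1 s2 kx by linarith
  have CCn: "fps_nth (CC k (insert x B)) t = of_nat t ^ card B * fps_nth (eisenstein w) t" for t
    by (simp add: CC_def qD_pow_nth cardI w_def)
  have "fps_nth (CC k (insert x B) * F) N = (\<Sum>t=0..N. fps_nth (CC k (insert x B)) t * fps_nth F (N - t))"
    by (rule fps_mult_nth)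
  also have "\<dots> = fps_nth (CC k (insert x B)) 0 * fps_nth F N +
                  (\<Sum>t=1..N. fps_nth (CC k (insert x B)) t * fps_nth F (N - t))"
    by (simp add: sum.atLeast_Suc_atMost)
  also have "fps_nth (CC k (insert x B)) 0 * fps_nth F N =
             (if B = {} then fps_nth (eisenstein (k x)) 0 * fps_nth F N else 0)"
  proof (cases "B = {}")
    case True
    then have wk: "w = k x" unfolding wdef by simp
    have "fps_nth (CC k (insert x B)) 0 = of_nat 0 ^ card B * fps_nth (eisenstein (k x)) 0"
      by (simp only: CCn wk)
    then show ?thesis using True by simp
  next
    case False
    then have "card B \<noteq> 0" using finB by simp
    then show ?thesis using False by (simp add: CCn)
  qed
  also have "(\<Sum>t=1..N. fps_nth (CC k (insert x B)) t * fps_nth F (N - t)) =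
       (\<Sum>t=1..N. \<Sum>d\<in>{d. d dvd t}. (\<lambda>m j. of_nat j ^ card B * of_nat m ^ e * fps_nth F (N - j*m)) d (t div d))"
  proof (rule sum.cong[OF refl])
    fix t assume t: "t \<in> {1..N}"
    have fin: "finite {d. d dvd t}" using t by (auto intro: finite_divisors_nat)
    have "fps_nth (CC k (insert x B)) t * fps_nth F (N - t) =
          (\<Sum>d\<in>{d. d dvd t}. of_nat t ^ card B * of_nat d ^ (w - 1) * fps_nth F (N - t))"
      using t by (simp add: CCn eisenstein_def sum_distrib_left sum_distrib_right mult.assoc)
    also have "\<dots> = (\<Sum>d\<in>{d. d dvd t}. of_nat (t div d) ^ card B * of_nat d ^ e * fps_nth F (N - (t div d) * d))"
    proof (rule sum.cong[OF refl])
      fix d assume "d \<in> {d. d dvd t}"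
      then have td: "t = (t div d) * d" by simp
      have "(of_nat t :: rat) ^ card B * of_nat d ^ (w - 1) =
            of_nat (t div d) ^ card B * (of_nat d ^ card B * of_nat d ^ (w - 1))"
        by (subst td) (simp add: power_mult_distrib mult.assoc)
      also have "\<dots> = of_nat (t div d) ^ card B * of_nat d ^ e"
        by (simp only: power_add[symmetric] we)
      finally show "of_nat t ^ card B * of_nat d ^ (w - 1) * fps_nth F (N - t) =
            of_nat (t div d) ^ card B * of_nat d ^ e * fps_nth F (N - (t div d) * d)"
        using td by simp
    qed
    finally show "fps_nth (CC k (insert x B)) t * fps_nth F (N - t) =
       (\<Sum>d\<in>{d. d dvd t}. (\<lambda>m j. of_nat j ^ card B * of_nat m ^ e * fps_nth F (N - j*m)) d (t div d))"
      by simp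
  qed
  also have "\<dots> = (\<Sum>m=1..N. \<Sum>j=1..N div m. of_nat j ^ card B * of_nat m ^ e * fps_nth F (N - j*m))"
    by (rule divisor_reindex)
  finally show ?thesis by (simp add: e_def)
qed

lemma of_nat_sum_mset_gen: "of_nat (\<Sum>x\<in>#M. g x) = (\<Sum>x\<in>#M. (of_nat (g x) :: 'a::semiring_1))"
  by (induction M) auto

lemma FF_nth: "fps_nth (FF k I) n = (\<Sum>M\<in>int_partitions n. \<Prod>i\<in>I. S_fun (k i) M)"
  by (simp add: FF_def)

lemma S_fun_count:
  assumes "M \<in> int_partitions N"
  shows "S_fun kk M = fps_nth (eisenstein kk) 0 +
           (\<Sum>m=1..N. of_nat (count M m) * of_nat m ^ (kk - 1))"
proof -
  have sub: "set_mset M \<subseteq> {1..N}"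
    using assms mem_le_sum_mset by (force simp: int_partitions_def)
  have "(of_nat (\<Sum>x\<in>#M. x ^ (kk - 1)) :: rat) = (\<Sum>x\<in>#M. of_nat x ^ (kk - 1))"
    by (induction M) auto
  also have "\<dots> = (\<Sum>m=1..N. of_nat (count M m) * of_nat m ^ (kk - 1))"
    by (rule sum_mset_count[OF sub]) simp
  finally show ?thesis by (simp add: S_fun_def eisenstein_def)
qed

lemma prod_shift:
  fixes J :: "nat set"
  assumes "finite J"
  shows "(\<Prod>i\<in>J. S_fun (k i) (\<mu> + replicate_mset j m)) =
    (\<Sum>B\<in>Pow J. (of_nat j ^ card B * of_nat m ^ (\<Sum>i\<in>B. k i - 1)) * (\<Prod>i\<in>J - B. S_fun (k i) \<mu>))"
proof -
  have "(\<Prod>i\<in>J. S_fun (k i) (\<mu> + replicate_mset j m)) =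
        (\<Prod>i\<in>J. of_nat j * of_nat m ^ (k i - 1) + S_fun (k i) \<mu>)"
    by (simp add: S_fun_add add.commute)
  also have "\<dots> = (\<Sum>B\<in>Pow J. (\<Prod>i\<in>B. of_nat j * of_nat m ^ (k i - 1)) * (\<Prod>i\<in>J - B. S_fun (k i) \<mu>))"
    by (rule prod_add[OF assms])
  also have "\<dots> = (\<Sum>B\<in>Pow J. (of_nat j ^ card B * of_nat m ^ (\<Sum>i\<in>B. k i - 1)) * (\<Prod>i\<in>J - B. S_fun (k i) \<mu>))"
    by (intro sum.cong refl) (simp add: prod.distrib power_sum)
  finally show ?thesis .
qed

lemma lhs_piece:
  assumes fin: "finite J" and xJ: "x \<notin> J"
  shows "fps_nth (FF k (insert x J)) N = fps_nth (eisenstein (k x)) 0 * fps_nth (FF k J) N +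
    (\<Sum>B\<in>Pow J. \<Sum>m=1..N. \<Sum>j=1..N div m. of_nat j ^ card B * of_nat m ^ ((k x - 1) + (\<Sum>i\<in>B. k i - 1)) * fps_nth (FF k (J - B)) (N - j*m))"
proof -
  define c where "c = fps_nth (eisenstein (k x)) 0"
  define P where "P M = (\<Prod>i\<in>J. S_fun (k i) M)" for M
  define a where "a = k x - 1"
  define b where "b B = (\<Sum>i\<in>B. k i - 1)" for B :: "nat set"
  have "fps_nth (FF k (insert x J)) N = (\<Sum>M\<in>int_partitions N. S_fun (k x) M * P M)"
    using fin xJ by (simp add: FF_nth P_def)
  also have "\<dots> = (\<Sum>M\<in>int_partitions N. c * P M +
                    (\<Sum>m=1..N. of_nat m ^ a * (of_nat (count M m) * P M)))"
    by (rule sum.cong[OF refl]) (simp add: S_fun_count c_def a_def algebra_simps sum_distrib_right sum_distrib_left)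
  also have "\<dots> = c * fps_nth (FF k J) N +
       (\<Sum>M\<in>int_partitions N. \<Sum>m=1..N. of_nat m ^ a * (of_nat (count M m) * P M))"
    by (simp add: sum.distrib FF_nth P_def sum_distrib_left)
  also have "(\<Sum>M\<in>int_partitions N. \<Sum>m=1..N. of_nat m ^ a * (of_nat (count M m) * P M)) =
       (\<Sum>m=1..N. of_nat m ^ a * (\<Sum>M\<in>int_partitions N. of_nat (count M m) * P M))"
    by (subst sum.swap) (simp add: sum_distrib_left)
  also have "(\<Sum>m=1..N. of_nat m ^ a * (\<Sum>M\<in>int_partitions N. of_nat (count M m) * P M)) =
     (\<Sum>m=1..N. \<Sum>j=1..N div m. \<Sum>B\<in>Pow J. of_nat j ^ card B * of_nat m ^ (a + b B) * fps_nth (FF k (J - B)) (N - j*m))"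
  proof (rule sum.cong[OF refl])
    fix m assume m: "m \<in> {1..N}"
    have "(\<Sum>M\<in>int_partitions N. of_nat (count M m) * P M) =
          (\<Sum>j=1..N div m. \<Sum>\<mu>\<in>int_partitions (N - j*m). P (\<mu> + replicate_mset j m))"
      using m by (intro count_lemma) auto
    also have "\<dots> = (\<Sum>j=1..N div m. \<Sum>B\<in>Pow J. (of_nat j ^ card B * of_nat m ^ b B) * fps_nth (FF k (J - B)) (N - j*m))"
    proof (rule sum.cong[OF refl])
      fix j
      have "(\<Sum>\<mu>\<in>int_partitions (N - j*m). P (\<mu> + replicate_mset j m)) =
            (\<Sum>\<mu>\<in>int_partitions (N - j*m). \<Sum>B\<in>Pow J. (of_nat j ^ card B * of_nat m ^ b B) * (\<Prod>i\<in>J - B. S_fun (k i) \<mu>))"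
        unfolding P_def b_def by (intro sum.cong refl prod_shift fin)
      also have "\<dots> = (\<Sum>B\<in>Pow J. \<Sum>\<mu>\<in>int_partitions (N - j*m). (of_nat j ^ card B * of_nat m ^ b B) * (\<Prod>i\<in>J - B. S_fun (k i) \<mu>))"
        by (rule sum.swap)
      also have "\<dots> = (\<Sum>B\<in>Pow J. (of_nat j ^ card B * of_nat m ^ b B) * fps_nth (FF k (J - B)) (N - j*m))"
        by (simp add: FF_nth sum_distrib_left)
      finally show "(\<Sum>\<mu>\<in>int_partitions (N - j*m). P (\<mu> + replicate_mset j m)) =
            (\<Sum>B\<in>Pow J. (of_nat j ^ card B * of_nat m ^ b B) * fps_nth (FF k (J - B)) (N - j*m))" .
    qed
    finally have "(\<Sum>M\<in>int_partitions N. of_nat (count M m) * P M) =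
       (\<Sum>j=1..N div m. \<Sum>B\<in>Pow J. (of_nat j ^ card B * of_nat m ^ b B) * fps_nth (FF k (J - B)) (N - j*m))" .
    then show "of_nat m ^ a * (\<Sum>M\<in>int_partitions N. of_nat (count M m) * P M) =
     (\<Sum>j=1..N div m. \<Sum>B\<in>Pow J. of_nat j ^ card B * of_nat m ^ (a + b B) * fps_nth (FF k (J - B)) (N - j*m))"
      by (simp add: sum_distrib_left power_add algebra_simps)
  qed
  also have "(\<Sum>m=1..N. \<Sum>j=1..N div m. \<Sum>B\<in>Pow J. of_nat j ^ card B * of_nat m ^ (a + b B) * fps_nth (FF k (J - B)) (N - j*m)) =
      (\<Sum>B\<in>Pow J. \<Sum>m=1..N. \<Sum>j=1..N div m. of_nat j ^ card B * of_nat m ^ (a + b B) * fps_nth (FF k (J - B)) (N - j*m))"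
    by (simp add: sum.swap[of _ "Pow J"])
  finally show ?thesis by (simp add: c_def a_def b_def)
qed

lemma key:
  assumes fin: "finite J" and xJ: "x \<notin> J" and kge: "\<forall>i\<in>insert x J. 2 \<le> k i"
  shows "FF k (insert x J) = (\<Sum>B\<in>Pow J. CC k (insert x B) * FF k (J - B))"
proof (rule fps_ext)
  fix N
  have "fps_nth (\<Sum>B\<in>Pow J. CC k (insert x B) * FF k (J - B)) N =
        (\<Sum>B\<in>Pow J. fps_nth (CC k (insert x B) * FF k (J - B)) N)"
    by (rule fps_sum_nth)
  also have "\<dots> = (\<Sum>B\<in>Pow J. (if B = {} then fps_nth (eisenstein (k x)) 0 * fps_nth (FF k (J - B)) N else 0) +
     (\<Sum>m=1..N. \<Sum>j=1..N div m. of_nat j ^ card B * of_nat m ^ ((k x - 1) + (\<Sum>i\<in>B. k i - 1)) * fps_nth (FF k (J - B)) (N - j*m)))"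
  proof (rule sum.cong[OF refl])
    fix B assume B: "B \<in> Pow J"
    then have "finite B" "x \<notin> B" "\<forall>i\<in>insert x B. 2 \<le> k i"
      using fin xJ kge by (auto intro: finite_subset)
    then show "fps_nth (CC k (insert x B) * FF k (J - B)) N = (if B = {} then fps_nth (eisenstein (k x)) 0 * fps_nth (FF k (J - B)) N else 0) +
     (\<Sum>m=1..N. \<Sum>j=1..N div m. of_nat j ^ card B * of_nat m ^ ((k x - 1) + (\<Sum>i\<in>B. k i - 1)) * fps_nth (FF k (J - B)) (N - j*m))"
      by (rule rhs_piece)
  qed
  also have "\<dots> = fps_nth (eisenstein (k x)) 0 * fps_nth (FF k J) N +
    (\<Sum>B\<in>Pow J. \<Sum>m=1..N. \<Sum>j=1..N div m. of_nat j ^ card B * of_nat m ^ ((k x - 1) + (\<Sum>i\<in>B. k i - 1)) * fps_nth (FF k (J - B)) (N - j*m))"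
    using fin by (simp add: sum.distrib)
  also have "\<dots> = fps_nth (FF k (insert x J)) N"
    by (rule lhs_piece[OF fin xJ, symmetric])
  finally show "fps_nth (FF k (insert x J)) N = fps_nth (\<Sum>B\<in>Pow J. CC k (insert x B) * FF k (J - B)) N" ..
qed

definition PP :: "rat fps" where
  "PP = Abs_fps (\<lambda>m. of_nat (card (int_partitions m)))"

lemma PP_nonzero: "PP \<noteq> 0"
proof
  assume "PP = 0"
  then have "fps_nth PP 0 = 0" by simp
  moreover have "fps_nth PP 0 = 1" by (simp add: PP_def IP_0)
  ultimately show False by simp
qed

lemma FF_empty: "FF k {} = PP"
  by (simp add: FF_def PP_def)

lemma main_formula:
  assumes "finite I" "\<forall>i\<in>I. 2 \<le> k i"
  shows "FF k I = PP * (\<Sum>\<alpha>\<in>{P. partition_on I P}. \<Prod>A\<in>\<alpha>. CC k A)"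
  using assms
proof (induction "card I" arbitrary: I rule: less_induct)
  case less
  show ?case
  proof (cases "I = {}")
    case True
    have "(\<Sum>\<alpha>\<in>{P. partition_on {} P}. \<Prod>A\<in>\<alpha>. CC k A) = 1"
      by (simp add: partition_on_empty)
    then show ?thesis using True by (simp add: FF_empty)
  next
    case False
    then obtain x where x: "x \<in> I" by auto
    define J where "J = I - {x}"
    have I: "I = insert x J" and xJ: "x \<notin> J" and finJ: "finite J"
      using x less.prems by (auto simp: J_def)
    have kge: "\<forall>i\<in>insert x J. 2 \<le> k i" using less.prems I by auto
    have cardI: "card I = Suc (card J)" using I xJ finJ by simp
    have IH: "FF k (J - B) = PP * (\<Sum>\<beta>\<in>{P. partition_on (J - B) P}. \<Prod>A\<in>\<beta>. CC k A)"
      if "B \<in> Pow J" for B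
    proof (rule less.hyps)
      have "card (J - B) \<le> card J" by (rule card_mono[OF finJ]) auto
      then show "card (J - B) < card I" using cardI by simp
      show "finite (J - B)" using finJ by simp
      show "\<forall>i\<in>J - B. 2 \<le> k i" using kge by auto
    qed
    have P1: "(\<Prod>A\<in>insert (insert x B) \<beta>. CC k A) = CC k (insert x B) * (\<Prod>A\<in>\<beta>. CC k A)"
      if "B \<in> Pow J" "partition_on (J - B) \<beta>" for B \<beta>
    proof -
      have "finite \<beta>" using finite_elements[OF _ that(2)] finJ by simp
      moreover have "insert x B \<notin> \<beta>"
      proof
        assume "insert x B \<in> \<beta>"
        then have "x \<in> \<Union>\<beta>" by auto
        then have "x \<in> J - B" using partition_onD1[OF that(2)] by simp
        then show False using xJ by simp
      qed
      ultimately show ?thesis by simp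
    qed
    have "FF k I = (\<Sum>B\<in>Pow J. CC k (insert x B) * FF k (J - B))"
      unfolding I by (rule key[OF finJ xJ kge])
    also have "\<dots> = (\<Sum>B\<in>Pow J. CC k (insert x B) * (PP * (\<Sum>\<beta>\<in>{P. partition_on (J - B) P}. \<Prod>A\<in>\<beta>. CC k A)))"
      by (rule sum.cong[OF refl]) (simp add: IH)
    also have "\<dots> = (\<Sum>B\<in>Pow J. PP * (\<Sum>\<beta>\<in>{P. partition_on (J - B) P}. \<Prod>A\<in>insert (insert x B) \<beta>. CC k A))"
    proof (rule sum.cong[OF refl])
      fix B assume B: "B \<in> Pow J"
      have "(\<Sum>\<beta>\<in>{P. partition_on (J - B) P}. \<Prod>A\<in>insert (insert x B) \<beta>. CC k A) =
            (\<Sum>\<beta>\<in>{P. partition_on (J - B) P}. CC k (insert x B) * (\<Prod>A\<in>\<beta>. CC k A))"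
        by (rule sum.cong[OF refl]) (simp add: P1[OF B])
      then show "CC k (insert x B) * (PP * (\<Sum>\<beta>\<in>{P. partition_on (J - B) P}. \<Prod>A\<in>\<beta>. CC k A)) =
                 PP * (\<Sum>\<beta>\<in>{P. partition_on (J - B) P}. \<Prod>A\<in>insert (insert x B) \<beta>. CC k A)"
        by (simp add: sum_distrib_left mult_ac)
    qed
    also have "\<dots> = PP * (\<Sum>B\<in>Pow J. \<Sum>\<beta>\<in>{P. partition_on (J - B) P}. \<Prod>A\<in>insert (insert x B) \<beta>. CC k A)"
      by (simp add: sum_distrib_left)
    also have "\<dots> = PP * (\<Sum>\<alpha>\<in>{P. partition_on I P}. \<Prod>A\<in>\<alpha>. CC k A)"
      unfolding I using part_recursion[OF finJ xJ, of "\<lambda>\<alpha>. \<Prod>A\<in>\<alpha>. CC k A"] by simp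
    finally show ?thesis .
  qed
qed

theorem theorem3p3p1:
  fixes n :: nat and k :: "nat \<Rightarrow> nat"
  assumes "1 \<le> n"
    and "\<forall>i\<in>{1..n}. 0 < k i \<and> even (k i)"
  shows "qbracket (\<lambda>M. \<Prod>i=1..n. S_fun (k i) M) =
         (\<Sum>\<alpha>\<in>{P. partition_on {1..n} P}.
            \<Prod>A\<in>\<alpha>. (qD ^^ (card A - 1)) (eisenstein ((\<Sum>a\<in>A. k a) + 2 - 2 * card A)))"
proof -
  have kge: "\<forall>i\<in>{1..n}. 2 \<le> k i"
  proof
    fix i assume "i \<in> {1..n}"
    then have "0 < k i" "even (k i)" using assms(2) by auto
    then show "2 \<le> k i" by presburger
  qed
  have "qbracket (\<lambda>M. \<Prod>i=1..n. S_fun (k i) M) = FF k {1..n} / PP"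
    by (simp add: qbracket_def FF_def PP_def)
  also have "\<dots> = PP * (\<Sum>\<alpha>\<in>{P. partition_on {1..n} P}. \<Prod>A\<in>\<alpha>. CC k A) / PP"
    using main_formula[of "{1..n}" k] kge by simp
  also have "\<dots> = (\<Sum>\<alpha>\<in>{P. partition_on {1..n} P}. \<Prod>A\<in>\<alpha>. CC k A)"
    using PP_nonzero by simp
  finally show ?thesis by (simp add: CC_def)
qed

end
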